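(* Let $R$ be a rack, $X$ an $R$-set and $p:X\to R$ a map with $p(x\cdot r)=p(x)\lhd r$ for all $x,r$ (i.e. a crossed module of racks $p:X\to R$). Let $N_X(R)$ and $N_R(R)$ be the cubical nerves defined below, and $p_*:N_X(R)\to N_R(R)$ the map $(x,r_1,\dots,r_n)\mapsto(p(x),r_1,\dots,r_n)$. Suppose that the rack space $B_R(R)=|N_R(R)|$ is arcwise connected and locally arcwise connected. Then the geometric realization $|p_*|:B_X(R)\to B_R(R)$ is a covering map of topological spaces.
   Context: A (right) rack is a set with a binary operation $\lhd$ such that each $x\mapsto x\lhd y$ is bijective and $(x\lhd y)\lhd z=(x\lhd z)\lhd(y\lhd z)$. An action of a rack $R$ on a set $Y$ is a family of bijections $y\mapsto y\cdot r$ with $(y\cdot r)\cdot r'=(y\cdot r')\cdot(r\lhd r')$. For such an action, the cubical set ($\Box$-set, no degeneracies) $N_Y(R)$ has as $n$-cubes the tuples $(y,r_1,\dots,r_n)\in Y\times R^n$, with face maps $\partial_i^0(y,r_1,\dots,r_n)=(y,r_1,\dots,\widehat{r_i},\dots,r_n)$ and $\partial_i^1(y,r_1,\dots,r_n)=(y\cdot r_i,\,r_1\lhd r_i,\dots,r_{i-1}\lhd r_i,\,r_{i+1},\dots,r_n)$ for $1\le i\le n$ (its 1-skeleton with 2-cubes as preferred squares is the action rack trunk: edges $y\xrightarrow{r}y\cdot r$). Its geometric realization $B_Y(R)=|N_Y(R)|=\big(\bigsqcup_n N_Y(R)_n\times[0,1]^n\big)/\!\sim$, glued along the face maps, is the rack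 space. $N_R(R)$ is the case $Y=R$ with $R$ acting on itself by $r\cdot r'=r\lhd r'$. *)

theory Defs
  imports "HOL-Analysis.Analysis"
begin

definition rack :: "('r \<Rightarrow> 'r \<Rightarrow> 'r) \<Rightarrow> bool" where
  "rack op \<longleftrightarrow> (\<forall>y. bij (\<lambda>x. op x y)) \<and>
     (\<forall>x y z. op (op x y) z = op (op x z) (op y z))"

definition rack_action :: "('r \<Rightarrow> 'r \<Rightarrow> 'r) \<Rightarrow> ('y \<Rightarrow> 'r \<Rightarrow> 'y) \<Rightarrow> bool" where
  "rack_action op act \<longleftrightarrow> (\<forall>r. bij (\<lambda>y. act y r)) \<and>
     (\<forall>y r r'. act (act y r) r' = act (act y r') (op r r'))"

text \<open>An n-cube (y, r_1, ..., r_n) is represented as (y, [r_1, ..., r_n]); indices are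
  0-based, so face index i (0 \<le> i < n) corresponds to the paper's index i+1.\<close>

definition face0 :: "nat \<Rightarrow> 'y \<times> 'r list \<Rightarrow> 'y \<times> 'r list" where
  "face0 i c = (fst c, take i (snd c) @ drop (Suc i) (snd c))"

definition face1 :: "('r \<Rightarrow> 'r \<Rightarrow> 'r) \<Rightarrow> ('y \<Rightarrow> 'r \<Rightarrow> 'y) \<Rightarrow> nat
    \<Rightarrow> 'y \<times> 'r list \<Rightarrow> 'y \<times> 'r list" where
  "face1 op act i c =
     (act (fst c) (snd c ! i),
      map (\<lambda>r. op r (snd c ! i)) (take i (snd c)) @ drop (Suc i) (snd c))"

text \<open>The standard n-cube [0,1]^n, realised inside nat \<Rightarrow> real (coordinates \<ge> n are 0),
  with the subspace topology of the product topology (homeomorphic to [0,1]^n).\<close>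
definition cube :: "nat \<Rightarrow> (nat \<Rightarrow> real) set" where
  "cube n = {t. (\<forall>i<n. 0 \<le> t i \<and> t i \<le> 1) \<and> (\<forall>i\<ge>n. t i = 0)}"

definition cube_top :: "nat \<Rightarrow> (nat \<Rightarrow> real) topology" where
  "cube_top n = subtopology (product_topology (\<lambda>_. euclideanreal) UNIV) (cube n)"

text \<open>Deleting the i-th coordinate (inverse of the coface inclusion inserting a coordinate).\<close>
definition del_coord :: "nat \<Rightarrow> (nat \<Rightarrow> real) \<Rightarrow> (nat \<Rightarrow> real)" where
  "del_coord i t = (\<lambda>j. if j < i then t j else t (Suc j))"

definition cells_top :: "(('y \<times> 'r list) \<times> (nat \<Rightarrow> real)) topology" where
  "cells_top = sum_topology (\<lambda>c. cube_top (length (snd c))) UNIV"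

definition glue :: "('r \<Rightarrow> 'r \<Rightarrow> 'r) \<Rightarrow> ('y \<Rightarrow> 'r \<Rightarrow> 'y)
    \<Rightarrow> ('y \<times> 'r list) \<times> (nat \<Rightarrow> real) \<Rightarrow> ('y \<times> 'r list) \<times> (nat \<Rightarrow> real) \<Rightarrow> bool" where
  "glue op act a b \<longleftrightarrow> snd a \<in> cube (length (snd (fst a))) \<and>
     (\<exists>i < length (snd (fst a)).
        (snd a i = 0 \<and> b = (face0 i (fst a), del_coord i (snd a))) \<or>
        (snd a i = 1 \<and> b = (face1 op act i (fst a), del_coord i (snd a))))"

definition nerve_equiv :: "('r \<Rightarrow> 'r \<Rightarrow> 'r) \<Rightarrow> ('y \<Rightarrow> 'r \<Rightarrow> 'y)
    \<Rightarrow> ('y \<times> 'r list) \<times> (nat \<Rightarrow> real) \<Rightarrow> ('y \<times> 'r list) \<times> (nat \<Rightarrow> real) \<Rightarrow> bool" where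
  "nerve_equiv op act = (\<lambda>a b. glue op act a b \<or> glue op act b a)\<^sup>*\<^sup>*"

text \<open>Quotient topology of X by a relation E (equivalence classes are the points).\<close>
definition eq_class :: "'a topology \<Rightarrow> ('a \<Rightarrow> 'a \<Rightarrow> bool) \<Rightarrow> 'a \<Rightarrow> 'a set" where
  "eq_class X E x = {y \<in> topspace X. E x y}"

definition quotient_topology :: "'a topology \<Rightarrow> ('a \<Rightarrow> 'a \<Rightarrow> bool) \<Rightarrow> 'a set topology" where
  "quotient_topology X E = topology (\<lambda>U. U \<subseteq> eq_class X E ` topspace X \<and>
       openin X {x \<in> topspace X. eq_class X E x \<in> U})"

lemma istopology_quotient:
  "istopology (\<lambda>U. U \<subseteq> eq_class X E ` topspace X \<and>
       openin X {x \<in> topspace X. eq_class X E x \<in> U})"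
proof -
  have 1: "{x \<in> topspace X. eq_class X E x \<in> S \<inter> T} =
           {x \<in> topspace X. eq_class X E x \<in> S} \<inter> {x \<in> topspace X. eq_class X E x \<in> T}" for S T
    by auto
  have 2: "{x \<in> topspace X. eq_class X E x \<in> \<Union>K} =
           (\<Union>U\<in>K. {x \<in> topspace X. eq_class X E x \<in> U}) \<inter> topspace X" for K
    by auto
  show ?thesis
    unfolding istopology_def 1 2 by blast
qed

definition rack_space :: "('r \<Rightarrow> 'r \<Rightarrow> 'r) \<Rightarrow> ('y \<Rightarrow> 'r \<Rightarrow> 'y)
    \<Rightarrow> (('y \<times> 'r list) \<times> (nat \<Rightarrow> real)) set topology" where
  "rack_space op act = quotient_topology cells_top (nerve_equiv op act)"

definition realize_map :: "('r \<Rightarrow> 'r \<Rightarrow> 'r) \<Rightarrow> ('z \<Rightarrow> 'r \<Rightarrow> 'z) \<Rightarrow> ('y \<Rightarrow> 'z)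
    \<Rightarrow> (('y \<times> 'r list) \<times> (nat \<Rightarrow> real)) set \<Rightarrow> (('z \<times> 'r list) \<times> (nat \<Rightarrow> real)) set" where
  "realize_map op act' f C =
     (let a = (SOME a. a \<in> C) in
      eq_class cells_top (nerve_equiv op act') ((f (fst (fst a)), snd (fst a)), snd a))"

text \<open>Covering map in the sense of Hatcher (every point of the base has an open evenly covered
  neighbourhood; empty fibres allowed), for abstract topologies.\<close>
definition covering_map :: "'a topology \<Rightarrow> 'b topology \<Rightarrow> ('a \<Rightarrow> 'b) \<Rightarrow> bool" where
  "covering_map E B p \<longleftrightarrow> continuous_map E B p \<and>
     (\<forall>b \<in> topspace B. \<exists>T. b \<in> T \<and> openin B T \<and>
        (\<exists>\<V>. \<Union>\<V> = {e \<in> topspace E. p e \<in> T} \<and>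
             (\<forall>U \<in> \<V>. openin E U) \<and> pairwise disjnt \<V> \<and>
             (\<forall>U \<in> \<V>. \<exists>q. homeomorphic_maps (subtopology E U) (subtopology B T) p q)))"

end

theory Submission
  imports Defs
begin


fun Fv :: "('y \<Rightarrow> 'r \<Rightarrow> 'y) \<Rightarrow> 'y \<Rightarrow> 'r list \<Rightarrow> bool option list \<Rightarrow> 'y" where
  "Fv act y (r#rs) (q#pat) = Fv act (if q = Some True then act y r else y) rs pat"
| "Fv act y _ _ = y"

fun Fl :: "('r \<Rightarrow> 'r \<Rightarrow> 'r) \<Rightarrow> 'r list \<Rightarrow> bool option list \<Rightarrow> 'r list" where
  "Fl op (r#rs) (q#pat) = (if q = None then Fv op r rs pat # Fl op rs pat else Fl op rs pat)"
| "Fl op _ _ = []"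

definition rmv :: "nat \<Rightarrow> 'a list \<Rightarrow> 'a list" where
  "rmv i xs = take i xs @ drop (Suc i) xs"

definition f1l :: "('r \<Rightarrow> 'r \<Rightarrow> 'r) \<Rightarrow> nat \<Rightarrow> 'r list \<Rightarrow> 'r list" where
  "f1l op i rs = map (\<lambda>r. op r (rs!i)) (take i rs) @ drop (Suc i) rs"

lemma rmv_Cons0[simp]: "rmv 0 (x#xs) = xs" by (simp add: rmv_def)
lemma rmv_ConsS[simp]: "rmv (Suc i) (x#xs) = x # rmv i xs" by (simp add: rmv_def)
lemma f1l_Cons0[simp]: "f1l op 0 (x#xs) = xs" by (simp add: f1l_def)
lemma f1l_ConsS[simp]: "f1l op (Suc i) (x#xs) = op x (xs!i) # f1l op i xs" by (simp add: f1l_def)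

lemma CI0v:
  "i < length rs \<Longrightarrow> length pat = length rs \<Longrightarrow> pat!i = Some False \<Longrightarrow>
   Fv act y (rmv i rs) (rmv i pat) = Fv act y rs pat"
proof (induction i arbitrary: y rs pat)
  case 0
  then show ?case by (cases rs; cases pat) auto
next
  case (Suc j)
  then obtain r rs' q pat' where e: "rs = r#rs'" "pat = q#pat'" by (cases rs; cases pat) auto
  show ?case using Suc.prems Suc.IH unfolding e by auto
qed

lemma CI0l:
  "i < length rs \<Longrightarrow> length pat = length rs \<Longrightarrow> pat!i = Some False \<Longrightarrow>
   Fl op (rmv i rs) (rmv i pat) = Fl op rs pat"
proof (induction i arbitrary: rs pat)
  case 0
  then show ?case by (cases rs; cases pat) auto
next
  case (Suc j)
  then obtain r rs' q pat' where e: "rs = r#rs'" "pat = q#pat'" by (cases rs; cases pat) auto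
  show ?case using Suc.prems Suc.IH CI0v[of j rs' pat' op r] unfolding e by auto
qed

lemma rack_action_self: "rack op \<Longrightarrow> rack_action op op"
  by (simp add: rack_def rack_action_def)

lemma CI1v:
  assumes "rack_action op act"
  shows "i < length rs \<Longrightarrow> length pat = length rs \<Longrightarrow> pat!i = Some True \<Longrightarrow>
   Fv act (act y (rs!i)) (f1l op i rs) (rmv i pat) = Fv act y rs pat"
proof (induction i arbitrary: y rs pat)
  case 0
  then show ?case by (cases rs; cases pat) auto
next
  case (Suc j)
  then obtain r rs' q pat' where e: "rs = r#rs'" "pat = q#pat'" by (cases rs; cases pat) auto
  have ax: "act (act y r) (rs'!j) = act (act y (rs'!j)) (op r (rs'!j))"
    using assms unfolding rack_action_def by blast
  show ?case using Suc.prems Suc.IH[of rs' pat' y] Suc.IH[of rs' pat' "act y r"] ax unfolding e by auto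
qed

lemma CI1l:
  assumes "rack_action op op"
  shows "i < length rs \<Longrightarrow> length pat = length rs \<Longrightarrow> pat!i = Some True \<Longrightarrow>
   Fl op (f1l op i rs) (rmv i pat) = Fl op rs pat"
proof (induction i arbitrary: rs pat)
  case 0
  then show ?case by (cases rs; cases pat) auto
next
  case (Suc j)
  then obtain r rs' q pat' where e: "rs = r#rs'" "pat = q#pat'" by (cases rs; cases pat) auto
  show ?case using Suc.prems Suc.IH[of rs' pat'] CI1v[OF assms, of j rs' pat' r] unfolding e by auto
qed

lemma Fv_equiv:
  assumes "\<And>x r. p (act x r) = op (p x) r"
  shows "p (Fv act x rs pat) = Fv op (p x) rs pat"
proof (induction rs arbitrary: x pat)
  case Nil then show ?case by simp
next
  case (Cons r rs) then show ?case by (cases pat) (simp_all add: assms)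
qed

lemma Fv_bij:
  assumes "rack_action op act"
  shows "\<exists>!x. Fv act x rs pat = z"
proof (induction rs arbitrary: z pat)
  case Nil then show ?case by simp
next
  case (Cons r rs)
  show ?case
  proof (cases pat)
    case Nil then show ?thesis by simp
  next
    case (Cons q pat')
    obtain w where w: "Fv act w rs pat' = z" "\<And>w'. Fv act w' rs pat' = z \<Longrightarrow> w' = w"
      using Cons.IH by metis
    have b: "bij (\<lambda>y. act y r)" using assms by (simp add: rack_action_def)
    show ?thesis
    proof (cases "q = Some True")
      case True
      obtain x where x: "act x r = w" using b by (metis bij_pointE)
      have u: "act x' r = w \<Longrightarrow> x' = x" for x' using b x unfolding bij_def inj_def by metis
      show ?thesis
      proof
        show "Fv act x (r # rs) pat = z" using True x w(1) Cons by simp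
        fix x' assume "Fv act x' (r # rs) pat = z"
        then have "Fv act (act x' r) rs pat' = z" using True Cons by simp
        then show "x' = x" using u w(2) by blast
      qed
    next
      case False
      show ?thesis
      proof
        show "Fv act w (r # rs) pat = z" using False w(1) Cons by simp
        fix x' assume "Fv act x' (r # rs) pat = z"
        then have "Fv act x' rs pat' = z" using False Cons by simp
        then show "x' = w" using w(2) by blast
      qed
    qed
  qed
qed



definition rnd :: "real \<Rightarrow> real \<Rightarrow> bool option" where
  "rnd e x = (if x < e then Some False else if 1 - e < x then Some True else None)"
definition vals :: "(nat \<Rightarrow> real) \<Rightarrow> nat \<Rightarrow> real list" where
  "vals u n = map u [0..<n]"
definition rho :: "real \<Rightarrow> (nat \<Rightarrow> real) \<Rightarrow> nat \<Rightarrow> bool option list" where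
  "rho e u n = map (rnd e) (vals u n)"
definition kv :: "real \<Rightarrow> (nat \<Rightarrow> real) \<Rightarrow> nat \<Rightarrow> real list" where
  "kv e u n = filter (\<lambda>x. rnd e x = None) (vals u n)"

definition sig :: "('r \<Rightarrow> 'r \<Rightarrow> 'r) \<Rightarrow> ('y \<Rightarrow> 'r \<Rightarrow> 'y) \<Rightarrow> real
   \<Rightarrow> ('y \<times> 'r list) \<times> (nat \<Rightarrow> real) \<Rightarrow> 'y \<times> 'r list \<times> real list" where
  "sig op act e a = (let n = length (snd (fst a)) in
     (Fv act (fst (fst a)) (snd (fst a)) (rho e (snd a) n), Fl op (snd (fst a)) (rho e (snd a) n),
      kv e (snd a) n))"

lemma length_rmv[simp]: "i < length xs \<Longrightarrow> length (rmv i xs) = length xs - 1"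
  by (simp add: rmv_def)

lemma vals_del: "i < n \<Longrightarrow> vals (del_coord i u) (n - 1) = rmv i (vals u n)"
  by (rule nth_equalityI) (auto simp: vals_def rmv_def del_coord_def nth_append min_def)

lemma map_rmv: "map f (rmv i xs) = rmv i (map f xs)"
  by (simp add: rmv_def take_map drop_map)

lemma filter_rmv: "i < length xs \<Longrightarrow> \<not> P (xs!i) \<Longrightarrow> filter P (rmv i xs) = filter P xs"
proof -
  assume a: "i < length xs" "\<not> P (xs!i)"
  have "xs = take i xs @ xs!i # drop (Suc i) xs" using a by (simp add: id_take_nth_drop)
  then have "filter P xs = filter P (take i xs) @ filter P (drop (Suc i) xs)"
    using a by (metis filter.simps(2) filter_append)
  then show ?thesis by (simp add: rmv_def)
qed

lemma glue_sig:
  assumes ro: "rack_action op op" and ra: "rack_action op act"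
    and e: "0 < e" "e < 1/2" and g: "glue op act a b"
  shows "sig op act e b = sig op act e a"
proof -
  obtain y rs u where a: "a = ((y, rs), u)" by (metis prod.collapse)
  define n where "n = length rs"
  from g obtain i where i: "i < n" and
    cs: "(u i = 0 \<and> b = (face0 i (y,rs), del_coord i u)) \<or>
         (u i = 1 \<and> b = (face1 op act i (y,rs), del_coord i u))"
    unfolding glue_def a n_def by auto
  have lr: "length (rho e u n) = length rs" by (simp add: rho_def vals_def n_def)
  have rd: "rho e (del_coord i u) (n - 1) = rmv i (rho e u n)"
    using i unfolding rho_def by (simp only: vals_del map_rmv)
  have ri: "rho e u n ! i = rnd e (u i)" using i by (simp add: rho_def vals_def)
  have kd: "kv e (del_coord i u) (n - 1) = kv e u n" if "u i = 0 \<or> u i = 1"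
    using i that e unfolding kv_def vals_del[OF i]
    by (intro filter_rmv) (auto simp: vals_def rnd_def)
  from cs show ?thesis
  proof
    assume h: "u i = 0 \<and> b = (face0 i (y,rs), del_coord i u)"
    have f: "face0 i (y,rs) = (y, rmv i rs)" by (simp add: face0_def rmv_def)
    have p: "rho e u n ! i = Some False" using ri h e by (simp add: rnd_def)
    show ?thesis using h f i lr rd kd p CI0v[of i rs "rho e u n" act y] CI0l[of i rs "rho e u n" op]
      unfolding sig_def a by (simp add: n_def Let_def)
  next
    assume h: "u i = 1 \<and> b = (face1 op act i (y,rs), del_coord i u)"
    have f: "face1 op act i (y,rs) = (act y (rs!i), f1l op i rs)" by (simp add: face1_def f1l_def)
    have lf: "length (f1l op i rs) = n - 1" using i by (simp add: f1l_def n_def)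
    have p: "rho e u n ! i = Some True" using ri h e by (simp add: rnd_def)
    show ?thesis using h f i lr rd kd p lf CI1v[OF ra, of i rs "rho e u n" y] CI1l[OF ro, of i rs "rho e u n"]
      unfolding sig_def a by (simp add: n_def Let_def)
  qed
qed



lemma topspace_cube_top[simp]: "topspace (cube_top n) = cube n"
  by (simp add: cube_top_def)

lemma topspace_cells: "topspace cells_top = {a. snd a \<in> cube (length (snd (fst a)))}"
  by (auto simp: cells_top_def)

lemma openin_cells: "openin cells_top U \<longleftrightarrow> U \<subseteq> topspace cells_top \<and>
   (\<forall>c. openin (cube_top (length (snd c))) {u. (c,u) \<in> U})"
  by (simp add: cells_top_def openin_sum_topology topspace_cells)

lemma openin_quot: "openin (quotient_topology X E) U \<longleftrightarrow>
   U \<subseteq> eq_class X E ` topspace X \<and> openin X {x \<in> topspace X. eq_class X E x \<in> U}"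
  unfolding quotient_topology_def by (simp only: topology_inverse'[OF istopology_quotient])

lemma topspace_quot: "topspace (quotient_topology X E) = eq_class X E ` topspace X"
proof -
  have "openin (quotient_topology X E) (eq_class X E ` topspace X)"
  proof -
    have "{x \<in> topspace X. eq_class X E x \<in> eq_class X E ` topspace X} = topspace X" by auto
    then show ?thesis unfolding openin_quot by simp
  qed
  then have 1: "eq_class X E ` topspace X \<subseteq> topspace (quotient_topology X E)" by (rule openin_subset)
  have "openin (quotient_topology X E) (topspace (quotient_topology X E))" by simp
  then have 2: "topspace (quotient_topology X E) \<subseteq> eq_class X E ` topspace X" unfolding openin_quot by blast
  show ?thesis using 1 2 by blast
qed

lemma quotient_map_quot: "quotient_map X (quotient_topology X E) (eq_class X E)"
  unfolding quotient_map_def topspace_quot by (auto simp: openin_quot)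

lemma eq_class_eq:
  assumes "equivp E" "x \<in> topspace X" "y \<in> topspace X"
  shows "eq_class X E x = eq_class X E y \<longleftrightarrow> E x y"
proof
  assume "eq_class X E x = eq_class X E y"
  moreover have "y \<in> eq_class X E y" using assms equivp_reflp[OF assms(1)] by (simp add: eq_class_def)
  ultimately have "y \<in> eq_class X E x" by simp
  then show "E x y" by (simp add: eq_class_def)
next
  assume h: "E x y"
  have "E x z \<longleftrightarrow> E y z" for z
    using h assms(1) by (meson equivp_symp equivp_transp)
  then show "eq_class X E x = eq_class X E y" by (simp add: eq_class_def)
qed

lemma eq_class_self: "equivp E \<Longrightarrow> x \<in> topspace X \<Longrightarrow> x \<in> eq_class X E x"
  by (simp add: eq_class_def equivp_reflp)

lemma nerve_equiv_equivp: "equivp (nerve_equiv op act)"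
  unfolding nerve_equiv_def by (rule equivp_rtranclp) (simp add: symp_def)

lemma cube_del: "u \<in> cube n \<Longrightarrow> i < n \<Longrightarrow> del_coord i u \<in> cube (n - 1)"
  by (auto simp: cube_def del_coord_def)

lemma length_face0: "i < length (snd c) \<Longrightarrow> length (snd (face0 i c)) = length (snd c) - 1"
  by (simp add: face0_def)
lemma length_face1: "i < length (snd c) \<Longrightarrow> length (snd (face1 op act i c)) = length (snd c) - 1"
  by (simp add: face1_def)

lemma glue_top: "glue op act a b \<Longrightarrow> a \<in> topspace cells_top \<and> b \<in> topspace cells_top"
  unfolding glue_def topspace_cells
  using cube_del[of "snd a" "length (snd (fst a))"] by (auto simp: length_face0 length_face1)

lemma nerve_top: "nerve_equiv op act a b \<Longrightarrow> a \<in> topspace cells_top \<Longrightarrow> b \<in> topspace cells_top"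
  unfolding nerve_equiv_def by (induction rule: rtranclp_induct) (auto dest: glue_top)

lemma nerve_sig:
  assumes "rack_action op op" "rack_action op act" "0 < e" "e < 1/2"
  shows "nerve_equiv op act a b \<Longrightarrow> sig op act e b = sig op act e a"
  unfolding nerve_equiv_def
  by (induction rule: rtranclp_induct) (auto dest: glue_sig[OF assms])

lemma reduced_rep:
  "a \<in> topspace cells_top \<Longrightarrow> \<exists>a1. nerve_equiv op act a a1 \<and> a1 \<in> topspace cells_top \<and>
     (\<forall>j<length (snd (fst a1)). 0 < snd a1 j \<and> snd a1 j < 1)"
proof (induction "length (snd (fst a))" arbitrary: a rule: less_induct)
  case less
  obtain c u where a: "a = (c,u)" by fastforce
  define n where "n = length (snd c)"
  have uc: "u \<in> cube n" using less.prems a by (simp add: topspace_cells n_def)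
  show ?case
  proof (cases "\<exists>j<n. u j = 0 \<or> u j = 1")
    case False
    then have "\<forall>j<n. 0 < u j \<and> u j < 1" using uc unfolding cube_def by force
    moreover have "nerve_equiv op act a a" by (simp add: nerve_equiv_def)
    ultimately show ?thesis using less.prems a n_def by (intro exI[of _ a]) auto
  next
    case True
    then obtain j where j: "j < n" "u j = 0 \<or> u j = 1" by blast
    define b where "b = (if u j = 0 then face0 j c else face1 op act j c, del_coord j u)"
    have g: "glue op act a b" unfolding glue_def b_def a using j uc n_def by auto
    have l: "length (snd (fst b)) < length (snd (fst a))"
      using j by (simp add: b_def a n_def length_face0 length_face1)
    obtain a1 where a1: "nerve_equiv op act b a1" "a1 \<in> topspace cells_top"
       "\<forall>j<length (snd (fst a1)). 0 < snd a1 j \<and> snd a1 j < 1"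
      using less.hyps[OF l] glue_top[OF g] by blast
    have g': "(\<lambda>a b. glue op act a b \<or> glue op act b a) a b" using g by simp
    have "nerve_equiv op act a a1" using a1(1) unfolding nerve_equiv_def
      by (rule converse_rtranclp_into_rtranclp[where r="\<lambda>a b. glue op act a b \<or> glue op act b a", OF g'])
    then show ?thesis using a1 by blast
  qed
qed

lemma openin_box:
  "(\<And>j. j < (n::nat) \<Longrightarrow> open (I j :: real set)) \<Longrightarrow>
   openin (product_topology (\<lambda>_. euclideanreal) UNIV) {u. \<forall>j<n. u j \<in> I j}"
proof (induction n)
  case 0
  have "{u. \<forall>j<(0::nat). u j \<in> I j} = topspace (product_topology (\<lambda>_. euclideanreal) (UNIV::nat set))"
    by simp
  then show ?case by (metis openin_topspace)
next
  case (Suc n)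
  have eq: "{u. \<forall>j<Suc n. u j \<in> I j} = {u. \<forall>j<n. u j \<in> I j} \<inter> {u \<in> topspace (product_topology (\<lambda>_. euclideanreal) UNIV). u n \<in> I n}"
    by (auto simp: less_Suc_eq)
  have "openin (product_topology (\<lambda>_. euclideanreal) UNIV) {u \<in> topspace (product_topology (\<lambda>_. euclideanreal) UNIV). u n \<in> I n}"
    by (rule openin_continuous_map_preimage[OF continuous_map_product_projection]) (simp_all add: Suc.prems)
  moreover have "openin (product_topology (\<lambda>_. euclideanreal) UNIV) {u. \<forall>j<n. u j \<in> I j}"
    using Suc.IH Suc.prems by simp
  ultimately show ?case unfolding eq by (rule openin_Int[rotated])
qed



definition good :: "real \<Rightarrow> (nat \<Rightarrow> real) \<Rightarrow> nat \<Rightarrow> (nat \<Rightarrow> real) \<Rightarrow> nat \<Rightarrow> bool" where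
  "good e t k u n \<longleftrightarrow> length (kv e u n) = k \<and> (\<forall>m<k. \<bar>t m - kv e u n ! m\<bar> < e)"

lemma kv_map: "kv e u n = map u (filter (\<lambda>j. rnd e (u j) = None) [0..<n])"
  by (simp add: kv_def vals_def filter_map o_def)

lemma local_nbhd:
  fixes e :: real and t :: "nat \<Rightarrow> real" and k n :: nat
  assumes e: "0 < e" "e < 1/2" and tb: "\<forall>m<k. 2*e \<le> t m \<and> t m \<le> 1 - 2*e"
    and u0: "u0 \<in> cube n" and g: "good e t k u0 n"
  shows "\<exists>W. openin (cube_top n) W \<and> u0 \<in> W \<and>
     (\<forall>u\<in>W. u \<in> cube n \<and> rho e u n = rho e u0 n \<and> good e t k u n)"
proof -
  define js where "js = filter (\<lambda>j. rnd e (u0 j) = None) [0..<n]"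
  have kv0: "kv e u0 n = map u0 js" by (simp add: kv_map js_def)
  have ljs: "length js = k" using g kv0 by (simp add: good_def)
  have close0: "\<bar>t m - u0 (js!m)\<bar> < e" if "m < k" for m
    using g that kv0 ljs by (simp add: good_def)
  define I where "I j = (if u0 j < e then {..<e} else if 1 - e < u0 j then {1-e<..}
      else {e<..<1-e} \<inter> (\<Inter>m\<in>{m. m<k \<and> js!m = j}. ball (t m) e))" for j
  have oI: "open (I j)" for j
  proof -
    have "finite {m. m<k \<and> js!m = j}" by simp
    then have "open (\<Inter>m\<in>{m. m<k \<and> js!m = j}. ball (t m) e)" by (intro open_INT) auto
    then show ?thesis unfolding I_def by auto
  qed
  define W where "W = cube n \<inter> {u. \<forall>j<n. u j \<in> I j}"
  have oW: "openin (cube_top n) W"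
    unfolding W_def cube_top_def by (rule openin_subtopology_Int2, rule openin_box, rule oI)
  have u0W: "u0 \<in> W"
  proof -
    have "u0 j \<in> I j" if j: "j < n" for j
    proof (cases "u0 j < e \<or> 1 - e < u0 j")
      case True then show ?thesis unfolding I_def by auto
    next
      case False
      then have "rnd e (u0 j) = None" by (simp add: rnd_def)
      then have "j \<in> set js" using j by (simp add: js_def)
      then obtain m where m: "m < k" "js!m = j" using ljs by (metis in_set_conv_nth)
      have "\<bar>t m - u0 j\<bar> < e" using close0[OF m(1)] m by simp
      then have "e < u0 j \<and> u0 j < 1 - e" using tb m(1) by auto
      moreover have "u0 j \<in> ball (t m') e" if "m' < k" "js!m' = j" for m'
        using close0[OF that(1)] that(2) by (simp add: dist_real_def)
      ultimately show ?thesis using False unfolding I_def by auto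
    qed
    then show ?thesis using u0 by (simp add: W_def)
  qed
  have "u \<in> cube n \<and> rho e u n = rho e u0 n \<and> good e t k u n" if uW: "u \<in> W" for u
  proof -
    have r: "rnd e (u j) = rnd e (u0 j)" if j: "j < n" for j
    proof -
      have uj: "u j \<in> I j" using uW j by (simp add: W_def)
      show ?thesis
      proof (cases "u0 j < e")
        case True then show ?thesis using uj by (simp add: I_def rnd_def)
      next
        case False
        show ?thesis
        proof (cases "1 - e < u0 j")
          case True then show ?thesis using uj False e by (simp add: I_def rnd_def)
        next
          case F2: False then show ?thesis using uj False by (simp add: I_def rnd_def)
        qed
      qed
    qed
    have rho: "rho e u n = rho e u0 n" by (simp add: rho_def vals_def r)
    have fj: "filter (\<lambda>j. rnd e (u j) = None) [0..<n] = js"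
      unfolding js_def by (rule filter_cong) (auto simp: r)
    have kvu: "kv e u n = map u js" by (simp add: kv_map fj)
    have "\<bar>t m - u (js!m)\<bar> < e" if m: "m < k" for m
    proof -
      have jin: "js!m \<in> set js" using m ljs by simp
      then have jn: "js!m < n" and jnone: "rnd e (u0 (js!m)) = None" by (auto simp: js_def)
      then have "\<not> u0 (js!m) < e" "\<not> 1 - e < u0 (js!m)" by (auto simp: rnd_def split: if_splits)
      moreover have "u (js!m) \<in> I (js!m)" using uW jn by (simp add: W_def)
      ultimately have "u (js!m) \<in> ball (t m) e" unfolding I_def using m by auto
      then show ?thesis by (simp add: dist_real_def)
    qed
    then have "good e t k u n" using ljs by (simp add: good_def kvu)
    then show ?thesis using uW rho by (simp add: W_def)
  qed
  then show ?thesis using oW u0W by blast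
qed



definition Pm :: "('x \<Rightarrow> 'r) \<Rightarrow> ('x \<times> 'r list) \<times> (nat \<Rightarrow> real) \<Rightarrow> ('r \<times> 'r list) \<times> (nat \<Rightarrow> real)" where
  "Pm p a = ((p (fst (fst a)), snd (fst a)), snd a)"

locale cm =
  fixes op :: "'r \<Rightarrow> 'r \<Rightarrow> 'r" and act :: "'x \<Rightarrow> 'r \<Rightarrow> 'x" and p :: "'x \<Rightarrow> 'r"
  assumes rk: "rack op" and ra: "rack_action op act" and eqv: "\<And>x r. p (act x r) = op (p x) r"
begin

abbreviation CX :: "(('x \<times> 'r list) \<times> (nat \<Rightarrow> real)) topology" where "CX \<equiv> cells_top"
abbreviation CR :: "(('r \<times> 'r list) \<times> (nat \<Rightarrow> real)) topology" where "CR \<equiv> cells_top"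
abbreviation QX where "QX \<equiv> eq_class CX (nerve_equiv op act)"
abbreviation QR where "QR \<equiv> eq_class CR (nerve_equiv op op)"

lemma ro: "rack_action op op" using rk by (rule rack_action_self)

lemma P_glue: "glue op act a b \<Longrightarrow> glue op op (Pm p a) (Pm p b)"
  unfolding glue_def Pm_def by (auto simp: face0_def face1_def eqv)

lemma P_nerve: "nerve_equiv op act a b \<Longrightarrow> nerve_equiv op op (Pm p a) (Pm p b)"
  unfolding nerve_equiv_def
proof (induction rule: rtranclp_induct)
  case base then show ?case by simp
next
  case (step y z)
  then have "(\<lambda>a b. glue op op a b \<or> glue op op b a) (Pm p y) (Pm p z)" using step.hyps(2) P_glue[of y z] P_glue[of z y] by blast
  with step.IH show ?case by (rule rtranclp.rtrancl_into_rtrancl)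
qed

lemma P_top: "a \<in> topspace CX \<Longrightarrow> Pm p a \<in> topspace CR"
  by (simp add: topspace_cells Pm_def)

lemma P_cont: "continuous_map CX CR (Pm p)"
  unfolding continuous_map_def
proof (intro conjI allI impI)
  show "Pm p \<in> topspace CX \<rightarrow> topspace CR" using P_top by blast
  fix U assume U: "openin CR U"
  show "openin CX {x \<in> topspace CX. Pm p x \<in> U}"
    unfolding openin_cells
  proof (intro conjI allI)
    fix c :: "'x \<times> 'r list"
    have "{u. (c, u) \<in> {x \<in> topspace CX. Pm p x \<in> U}} = {u. ((p (fst c), snd c), u) \<in> U}"
      using U by (auto simp: topspace_cells Pm_def openin_cells)
    moreover have "openin (cube_top (length (snd c))) {u. ((p (fst c), snd c), u) \<in> U}"
      using U unfolding openin_cells by (metis snd_conv)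
    ultimately show "openin (cube_top (length (snd c))) {u. (c, u) \<in> {x \<in> topspace CX. Pm p x \<in> U}}"
      by simp
  qed auto
qed

lemma realize_Q: "a \<in> topspace CX \<Longrightarrow> realize_map op op p (QX a) = QR (Pm p a)"
proof -
  assume a: "a \<in> topspace CX"
  define a' where "a' = (SOME a'. a' \<in> QX a)"
  have "a \<in> QX a" using a by (rule eq_class_self[OF nerve_equiv_equivp])
  then have "a' \<in> QX a" unfolding a'_def by (rule someI)
  then have a': "a' \<in> topspace CX" "nerve_equiv op act a a'" by (auto simp: eq_class_def)
  have "QR (Pm p a') = QR (Pm p a)"
    using eq_class_eq[OF nerve_equiv_equivp P_top[OF a'(1)] P_top[OF a]] P_nerve[OF a'(2)]
      nerve_equiv_equivp by (metis equivp_symp)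
  then show ?thesis unfolding realize_map_def a'_def[symmetric] by (simp add: Let_def Pm_def)
qed

lemma realize_cont: "continuous_map (rack_space op act) (rack_space op op) (realize_map op op p)"
proof (rule continuous_compose_quotient_map)
  show "quotient_map CX (rack_space op act) QX" unfolding rack_space_def by (rule quotient_map_quot)
  have "continuous_map CX (rack_space op op) (QR \<circ> Pm p)"
    unfolding rack_space_def
    by (rule continuous_map_compose[OF P_cont quotient_imp_continuous_map[OF quotient_map_quot]])
  then show "continuous_map CX (rack_space op op) (realize_map op op p \<circ> QX)"
    by (rule continuous_map_eq) (simp add: realize_Q)
qed

end


definition Psi :: "('r \<Rightarrow> 'r \<Rightarrow> 'r) \<Rightarrow> ('y \<Rightarrow> 'r \<Rightarrow> 'y) \<Rightarrow> real \<Rightarrow> (nat \<Rightarrow> real) \<Rightarrow> nat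
    \<Rightarrow> 'r list \<Rightarrow> 'y \<Rightarrow> ('y \<times> 'r list) \<times> (nat \<Rightarrow> real) \<Rightarrow> bool" where
  "Psi op act e t k cl z a \<longleftrightarrow> a \<in> topspace cells_top \<and>
     Fv act (fst (fst a)) (snd (fst a)) (rho e (snd a) (length (snd (fst a)))) = z \<and>
     Fl op (snd (fst a)) (rho e (snd a) (length (snd (fst a)))) = cl \<and>
     good e t k (snd a) (length (snd (fst a)))"

definition Lx :: "('y \<Rightarrow> 'r \<Rightarrow> 'y) \<Rightarrow> real \<Rightarrow> 'y \<Rightarrow> ('r \<times> 'r list) \<times> (nat \<Rightarrow> real)
    \<Rightarrow> ('y \<times> 'r list) \<times> (nat \<Rightarrow> real)" where
  "Lx act e z a = ((THE x. Fv act x (snd (fst a)) (rho e (snd a) (length (snd (fst a)))) = z,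
      snd (fst a)), snd a)"

lemma Psi_inv:
  assumes "rack_action op op" "rack_action op act" "0 < e" "e < 1/2"
    and n: "nerve_equiv op act a b" and ps: "Psi op act e t k cl z a"
  shows "Psi op act e t k cl z b"
proof -
  have bt: "b \<in> topspace cells_top" using nerve_top[OF n] ps by (simp add: Psi_def)
  have "sig op act e b = sig op act e a" by (rule nerve_sig[OF assms(1-4) n])
  then show ?thesis using ps bt unfolding Psi_def sig_def good_def by (simp add: Let_def)
qed

lemma Psi_W:
  assumes "Psi op act e t k cl z (c, u0)" "u \<in> cube (length (snd c))"
    "rho e u (length (snd c)) = rho e u0 (length (snd c))" "good e t k u (length (snd c))"
  shows "Psi op act e t k cl z (c, u)"
  using assms by (simp add: Psi_def topspace_cells)

lemma Psi_open:
  assumes e: "0 < e" "e < 1/2" and tb: "\<forall>m<k. 2*e \<le> t m \<and> t m \<le> 1 - 2*e"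
  shows "openin cells_top {a. Psi op act e t k cl z a}"
  unfolding openin_cells
proof (intro conjI allI)
  show "{a. Psi op act e t k cl z a} \<subseteq> topspace cells_top" by (auto simp: Psi_def)
  fix c :: "'a \<times> 'b list"
  show "openin (cube_top (length (snd c))) {u. (c, u) \<in> {a. Psi op act e t k cl z a}}"
  proof (subst openin_subopen, intro ballI)
    fix u0 assume "u0 \<in> {u. (c, u) \<in> {a. Psi op act e t k cl z a}}"
    then have ps: "Psi op act e t k cl z (c, u0)" by simp
    then have "u0 \<in> cube (length (snd c))" "good e t k u0 (length (snd c))"
      by (auto simp: Psi_def topspace_cells)
    from local_nbhd[OF e tb this] obtain W where W: "openin (cube_top (length (snd c))) W" "u0 \<in> W"
      "\<forall>u\<in>W. u \<in> cube (length (snd c)) \<and> rho e u (length (snd c)) = rho e u0 (length (snd c)) \<and>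
         good e t k u (length (snd c))" by blast
    have "W \<subseteq> {u. (c, u) \<in> {a. Psi op act e t k cl z a}}" using W(3) Psi_W[OF ps] by blast
    then show "\<exists>T. openin (cube_top (length (snd c))) T \<and> u0 \<in> T \<and> T \<subseteq> {u. (c, u) \<in> {a. Psi op act e t k cl z a}}"
      using W by blast
  qed
qed

lemma Fv_None: "Fv act y rs (replicate (length rs) None) = y"
  by (induction rs arbitrary: y) auto
lemma Fl_None: "Fl op rs (replicate (length rs) None) = rs"
  by (induction rs) (auto simp: Fv_None)

context cm begin

lemma Lx_P: "Fv act (fst (fst a)) (snd (fst a)) (rho e (snd a) (length (snd (fst a)))) = z \<Longrightarrow>
   Lx act e z (Pm p a) = a"
proof -
  assume h: "Fv act (fst (fst a)) (snd (fst a)) (rho e (snd a) (length (snd (fst a)))) = z"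
  obtain x rs u where a: "a = ((x, rs), u)" by (metis prod.collapse)
  have "(THE x'. Fv act x' rs (rho e u (length rs)) = z) = x"
    by (rule the1_equality[OF Fv_bij[OF ra]]) (use h a in simp)
  then show ?thesis by (simp add: Lx_def Pm_def a)
qed

lemma Lx_in:
  assumes ps: "Psi op op e t k cl r0 a" and z: "p z = r0"
  shows "Psi op act e t k cl z (Lx act e z a) \<and> Pm p (Lx act e z a) = a"
proof -
  obtain r rs u where a: "a = ((r, rs), u)" by (metis prod.collapse)
  define \<rho> where "\<rho> = rho e u (length rs)"
  define x where "x = (THE x. Fv act x rs \<rho> = z)"
  have x: "Fv act x rs \<rho> = z" unfolding x_def by (rule theI'[OF Fv_bij[OF ra]])
  have l: "Lx act e z a = ((x, rs), u)" by (simp add: Lx_def a x_def \<rho>_def)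
  have "Fv op (p x) rs \<rho> = r0" using Fv_equiv[of p act op, OF eqv] x z by metis
  moreover have "Fv op r rs \<rho> = r0" using ps by (simp add: Psi_def a \<rho>_def)
  ultimately have "p x = r" using Fv_bij[OF ro, of rs \<rho> r0] by blast
  then show ?thesis using ps x unfolding l by (simp add: Psi_def a \<rho>_def topspace_cells Pm_def)
qed

lemma Lx_glue:
  assumes ps: "Psi op op e t k cl r0 y" and z: "p z = r0" and g: "glue op op y w"
    and e: "0 < e" "e < 1/2"
  shows "glue op act (Lx act e z y) (Lx act e z w)"
proof -
  obtain r rs u where y: "y = ((r, rs), u)" by (metis prod.collapse)
  obtain x where l: "Lx act e z y = ((x, rs), u)" by (simp add: Lx_def y)
  have px: "p x = r" using Lx_in[OF ps z] l y by (simp add: Pm_def)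
  have psl: "Psi op act e t k cl z ((x, rs), u)" using Lx_in[OF ps z] l by simp
  from g obtain i where i: "i < length rs" "u \<in> cube (length rs)" and
    cs: "(u i = 0 \<and> w = (face0 i (r,rs), del_coord i u)) \<or>
         (u i = 1 \<and> w = (face1 op op i (r,rs), del_coord i u))"
    unfolding glue_def y by auto
  define w' where "w' = (if u i = 0 then face0 i (x,rs) else face1 op act i (x,rs), del_coord i u)"
  have g': "glue op act ((x, rs), u) w'" unfolding glue_def w'_def using i cs by auto
  have pw: "Pm p w' = w" using cs px unfolding w'_def Pm_def by (auto simp: face0_def face1_def eqv)
  have "Psi op act e t k cl z w'"
  proof (rule Psi_inv[OF ro ra e _ psl])
    show "nerve_equiv op act ((x, rs), u) w'" unfolding nerve_equiv_def
      by (rule r_into_rtranclp[where r="\<lambda>a b. glue op act a b \<or> glue op act b a"]) (simp add: g')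
  qed
  then have "Lx act e z w = w'" using pw Lx_P by (metis Psi_def)
  then show ?thesis using g' l by simp
qed

lemma Lx_nerve:
  assumes n: "nerve_equiv op op a b" and ps: "Psi op op e t k cl r0 a" and z: "p z = r0"
    and e: "0 < e" "e < 1/2"
  shows "nerve_equiv op act (Lx act e z a) (Lx act e z b)"
  using n unfolding nerve_equiv_def
proof (induction rule: rtranclp_induct)
  case base then show ?case by simp
next
  case (step y w)
  have py: "Psi op op e t k cl r0 y"
    using Psi_inv[OF ro ro e _ ps] step.hyps(1) by (simp add: nerve_equiv_def)
  have "nerve_equiv op op y w" unfolding nerve_equiv_def
    by (rule r_into_rtranclp[where r="\<lambda>a b. glue op op a b \<or> glue op op b a"]) (rule step.hyps(2))
  then have pw: "Psi op op e t k cl r0 w"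
    using Psi_inv[OF ro ro e _ py] by blast
  have "(\<lambda>a b. glue op act a b \<or> glue op act b a) (Lx act e z y) (Lx act e z w)"
    using step.hyps(2) Lx_glue[OF py z _ e, of w] Lx_glue[OF pw z _ e, of y] by blast
  with step.IH show ?case by (rule rtranclp.rtrancl_into_rtrancl)
qed

end


context cm begin

lemma Lx_cont:
  assumes e: "0 < e" "e < 1/2" and tb: "\<forall>m<k. 2*e \<le> t m \<and> t m \<le> 1 - 2*e" and z: "p z = r0"
  shows "continuous_map (subtopology CR {a. Psi op op e t k cl r0 a}) CX (Lx act e z)"
proof -
  let ?A = "{a. Psi op op e t k cl r0 a}"
  have oA: "openin CR ?A" by (rule Psi_open[OF e tb])
  show ?thesis unfolding continuous_map_def
  proof (intro conjI allI impI)
    show "Lx act e z \<in> topspace (subtopology CR ?A) \<rightarrow> topspace CX"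
      using Lx_in[OF _ z] by (auto simp: Psi_def)
    fix U assume U: "openin CX U"
    have Uc: "\<forall>c'. openin (cube_top (length (snd c'))) {u. (c',u) \<in> U}" using U openin_cells by blast
    let ?S = "{a \<in> topspace (subtopology CR ?A). Lx act e z a \<in> U}"
    have "openin CR ?S"
      unfolding openin_cells
    proof (intro conjI allI)
      show "?S \<subseteq> topspace CR" by auto
      fix c :: "'r \<times> 'r list"
      let ?n = "length (snd c)"
      show "openin (cube_top ?n) {u. (c,u) \<in> ?S}"
      proof (subst openin_subopen, intro ballI)
        fix u0 assume "u0 \<in> {u. (c,u) \<in> ?S}"
        then have ps: "Psi op op e t k cl r0 (c,u0)" and inU: "Lx act e z (c,u0) \<in> U" by auto
        then have "u0 \<in> cube ?n" "good e t k u0 ?n" by (auto simp: Psi_def topspace_cells)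
        from local_nbhd[OF e tb this] obtain W where W: "openin (cube_top ?n) W" "u0 \<in> W"
          "\<forall>u\<in>W. u \<in> cube ?n \<and> rho e u ?n = rho e u0 ?n \<and> good e t k u ?n" by blast
        define x0 where "x0 = (THE x. Fv act x (snd c) (rho e u0 ?n) = z)"
        have Lu: "Lx act e z (c,u) = ((x0, snd c), u)" if "u \<in> W" for u
          using W(3) that by (simp add: Lx_def x0_def)
        define V where "V = W \<inter> {u. ((x0, snd c), u) \<in> U}"
        have "openin (cube_top ?n) {u. ((x0, snd c), u) \<in> U}" using spec[OF Uc, of "(x0, snd c)"] by simp
        then have oV: "openin (cube_top ?n) V" unfolding V_def using W(1) by blast
        have u0V: "u0 \<in> V" using W(2) inU Lu[OF W(2)] by (simp add: V_def)
        have "V \<subseteq> {u. (c,u) \<in> ?S}"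
        proof
          fix u assume u: "u \<in> V"
          then have uW: "u \<in> W" by (simp add: V_def)
          have "Psi op op e t k cl r0 (c,u)" using W(3) uW Psi_W[OF ps] by blast
          moreover then have "(c,u) \<in> topspace CR" by (simp add: Psi_def)
          ultimately show "u \<in> {u. (c,u) \<in> ?S}" using u Lu[OF uW] by (simp add: V_def)
        qed
        then show "\<exists>T. openin (cube_top ?n) T \<and> u0 \<in> T \<and> T \<subseteq> {u. (c,u) \<in> ?S}"
          using oV u0V by blast
      qed
    qed
    then show "openin (subtopology CR ?A) ?S" using oA by (auto simp: openin_open_subtopology)
  qed
qed

end


lemma rho_None: "(\<forall>j<k. rnd e (t j) = None) \<Longrightarrow> rho e t k = replicate k None"
  by (rule nth_equalityI) (auto simp: rho_def vals_def)

lemma kv_all: "(\<forall>j<k. rnd e (t j) = None) \<Longrightarrow> kv e t k = map t [0..<k]"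
  by (simp add: kv_map)

context cm begin

lemma local_cover:
  assumes b: "b \<in> topspace (rack_space op op)"
  shows "\<exists>T. b \<in> T \<and> openin (rack_space op op) T \<and>
        (\<exists>\<V>. \<Union>\<V> = {y \<in> topspace (rack_space op act). realize_map op op p y \<in> T} \<and>
             (\<forall>U \<in> \<V>. openin (rack_space op act) U) \<and> pairwise disjnt \<V> \<and>
             (\<forall>U \<in> \<V>. \<exists>q. homeomorphic_maps (subtopology (rack_space op act) U)
                 (subtopology (rack_space op op) T) (realize_map op op p) q))"
proof -
  have eqR: "equivp (nerve_equiv op op)" and eqX: "equivp (nerve_equiv op act)"
    by (rule nerve_equiv_equivp)+
  obtain a0 where a0: "a0 \<in> topspace CR" "b = QR a0"
    using b by (auto simp: rack_space_def topspace_quot)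
  obtain a1 where a1: "nerve_equiv op op a0 a1" "a1 \<in> topspace CR"
     "\<forall>j<length (snd (fst a1)). 0 < snd a1 j \<and> snd a1 j < 1"
    using reduced_rep[OF a0(1)] by blast
  obtain r0 cl t where a1e: "a1 = ((r0,cl),t)" by (metis prod.collapse)
  define k where "k = length cl"
  have tI: "\<forall>j<k. 0 < t j \<and> t j < 1" using a1(3) by (simp add: a1e k_def)
  have tc: "t \<in> cube k" using a1(2) by (simp add: a1e k_def topspace_cells)
  define M where "M = insert (1/4::real) ((\<lambda>j. min (t j) (1 - t j) / 2) ` {..<k})"
  define e where "e = Min M"
  have fin: "finite M" "M \<noteq> {}" by (auto simp: M_def)
  have e14: "e \<le> 1/4" unfolding e_def by (rule Min_le[OF fin(1)]) (simp add: M_def)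
  have epos: "0 < e" unfolding e_def using fin tI by (auto simp: Min_gr_iff M_def)
  have e2: "e < 1/2" using e14 by simp
  have tb: "\<forall>m<k. 2*e \<le> t m \<and> t m \<le> 1 - 2*e"
  proof (intro allI impI)
    fix m assume m: "m < k"
    have "e \<le> min (t m) (1 - t m) / 2" unfolding e_def by (rule Min_le[OF fin(1)]) (use m in \<open>simp add: M_def\<close>)
    then show "2*e \<le> t m \<and> t m \<le> 1 - 2*e" by simp
  qed
  define AR where "AR = {a. Psi op op e t k cl r0 a}"
  define AX where "AX z = {a. Psi op act e t k cl z a}" for z
  define T where "T = QR ` AR"
  have ARt: "AR \<subseteq> topspace CR" by (auto simp: AR_def Psi_def)
  have AXt: "AX z \<subseteq> topspace CX" for z by (auto simp: AX_def Psi_def)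
  have satR: "QR a \<in> T \<longleftrightarrow> a \<in> AR" if a: "a \<in> topspace CR" for a
  proof
    assume "QR a \<in> T"
    then obtain a' where a': "a' \<in> AR" "QR a = QR a'" by (auto simp: T_def)
    then have "nerve_equiv op op a' a" using eq_class_eq[OF eqR] a ARt
      by (metis equivp_symp eqR subsetD)
    then show "a \<in> AR" using a'(1) Psi_inv[OF ro ro epos e2] by (auto simp: AR_def)
  qed (simp add: T_def)
  have satX: "QX a \<in> QX ` AX z \<longleftrightarrow> a \<in> AX z" if a: "a \<in> topspace CX" for a z
  proof
    assume "QX a \<in> QX ` AX z"
    then obtain a' where a': "a' \<in> AX z" "QX a = QX a'" by auto
    then have "nerve_equiv op act a' a" using eq_class_eq[OF eqX] a AXt
      by (metis equivp_symp eqX subsetD)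
    then show "a \<in> AX z" using a'(1) Psi_inv[OF ro ra epos e2] by (auto simp: AX_def)
  qed simp
  have preR: "{x \<in> topspace CR. QR x \<in> T} = AR" using satR ARt by auto
  have preX: "{x \<in> topspace CX. QX x \<in> QX ` AX z} = AX z" for z
  proof (rule set_eqI)
    fix x show "x \<in> {x \<in> topspace CX. QX x \<in> QX ` AX z} \<longleftrightarrow> x \<in> AX z"
      using satX[of x z] AXt[of z] by blast
  qed
  have openT: "openin (rack_space op op) T"
    unfolding rack_space_def openin_quot preR
    using ARt Psi_open[OF epos e2 tb] by (auto simp: T_def AR_def)
  have openU: "openin (rack_space op act) (QX ` AX z)" for z
    unfolding rack_space_def openin_quot preX
    using AXt Psi_open[OF epos e2 tb] by (auto simp: AX_def)
  have a1R: "a1 \<in> AR"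
  proof -
    have nn: "\<forall>j<k. rnd e (t j) = None" using tb epos by (auto simp: rnd_def)
    show ?thesis using a1(2) rho_None[OF nn] kv_all[OF nn] Fv_None[of op r0 cl] Fl_None[of op cl] epos
      by (simp add: AR_def Psi_def a1e k_def[symmetric] good_def)
  qed
  have bT: "b \<in> T"
  proof -
    have "QR a0 = QR a1" using eq_class_eq[OF eqR a0(1) a1(2)] a1(1) by simp
    then show ?thesis using a0(2) a1R by (simp add: T_def)
  qed
  have sigP: "Pm p a \<in> AR \<longleftrightarrow> (\<exists>z. p z = r0 \<and> a \<in> AX z)" if a: "a \<in> topspace CX" for a
  proof -
    obtain x rs u where ae: "a = ((x, rs), u)" by (metis prod.collapse)
    have "p (Fv act x rs (rho e u (length rs))) = Fv op (p x) rs (rho e u (length rs))"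
      by (rule Fv_equiv[of p act op, OF eqv])
    then show ?thesis using a
      by (auto simp: AR_def AX_def Psi_def Pm_def ae topspace_cells)
  qed
  define \<V> where "\<V> = (\<lambda>z. QX ` AX z) ` {z. p z = r0}"
  have topE: "topspace (rack_space op act) = QX ` topspace CX"
    by (simp add: rack_space_def topspace_quot)
  have union: "\<Union>\<V> = {y \<in> topspace (rack_space op act). realize_map op op p y \<in> T}"
  proof
    show "\<Union>\<V> \<subseteq> {y \<in> topspace (rack_space op act). realize_map op op p y \<in> T}"
    proof
      fix y assume "y \<in> \<Union>\<V>"
      then obtain z a where za: "p z = r0" "a \<in> AX z" "y = QX a" by (auto simp: \<V>_def)
      have at: "a \<in> topspace CX" using za(2) AXt by blast
      have "Pm p a \<in> AR" using sigP[OF at] za by blast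
      then show "y \<in> {y \<in> topspace (rack_space op act). realize_map op op p y \<in> T}"
        using za(3) at realize_Q[OF at] topE by (auto simp: T_def)
    qed
    show "{y \<in> topspace (rack_space op act). realize_map op op p y \<in> T} \<subseteq> \<Union>\<V>"
    proof
      fix y assume y: "y \<in> {y \<in> topspace (rack_space op act). realize_map op op p y \<in> T}"
      then obtain a where a: "a \<in> topspace CX" "y = QX a" using topE by auto
      have "QR (Pm p a) \<in> T" using y a realize_Q[OF a(1)] by simp
      then have "Pm p a \<in> AR" using satR[OF P_top[OF a(1)]] by simp
      then obtain z where "p z = r0" "a \<in> AX z" using sigP[OF a(1)] by blast
      then show "y \<in> \<Union>\<V>" using a by (auto simp: \<V>_def)
    qed
  qed
  have disj: "pairwise disjnt \<V>"
  proof (unfold pairwise_def, intro ballI impI)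
    fix U1 U2 assume U: "U1 \<in> \<V>" "U2 \<in> \<V>" "U1 \<noteq> U2"
    then obtain z1 z2 where z: "U1 = QX ` AX z1" "U2 = QX ` AX z2" by (auto simp: \<V>_def)
    show "disjnt U1 U2"
    proof (rule ccontr)
      assume "\<not> disjnt U1 U2"
      then obtain a1' a2' where aa: "a1' \<in> AX z1" "a2' \<in> AX z2" "QX a1' = QX a2'"
        using z by (auto simp: disjnt_def)
      then have "nerve_equiv op act a1' a2'" using eq_class_eq[OF eqX] AXt by blast
      then have "a2' \<in> AX z1" using aa(1) Psi_inv[OF ro ra epos e2] by (auto simp: AX_def)
      then have "z1 = z2" using aa(2) by (auto simp: AX_def Psi_def)
      then show False using U z by simp
    qed
  qed
  have homeo: "\<exists>q. homeomorphic_maps (subtopology (rack_space op act) U)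
                 (subtopology (rack_space op op) T) (realize_map op op p) q" if U: "U \<in> \<V>" for U
  proof -
    obtain z where z: "p z = r0" "U = QX ` AX z" using U by (auto simp: \<V>_def)
    define q where "q C = QX (Lx act e z (SOME a. a \<in> C))" for C
    have LAX: "Lx act e z a \<in> AX z" "Pm p (Lx act e z a) = a" if "a \<in> AR" for a
      using Lx_in[of e t k cl r0 a z] that z(1) by (auto simp: AR_def AX_def)
    have qQ: "q (QR a) = QX (Lx act e z a)" if a: "a \<in> AR" for a
    proof -
      define a' where "a' = (SOME a'. a' \<in> QR a)"
      have "a \<in> QR a" using a ARt by (intro eq_class_self[OF eqR]) auto
      then have "a' \<in> QR a" unfolding a'_def by (rule someI)
      then have a': "a' \<in> topspace CR" "nerve_equiv op op a a'" by (auto simp: eq_class_def)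
      have "nerve_equiv op act (Lx act e z a) (Lx act e z a')"
        using Lx_nerve[OF a'(2) _ z(1) epos e2] a by (simp add: AR_def)
      then have "QX (Lx act e z a') = QX (Lx act e z a)"
        using eq_class_eq[OF eqX] LAX[OF a] a' AXt
        by (metis eqX equivp_symp Psi_def AR_def mem_Collect_eq Lx_in z(1) a'(2) a Psi_inv ro epos e2)
      then show ?thesis by (simp add: q_def a'_def)
    qed
    have c1: "continuous_map (subtopology (rack_space op act) U) (subtopology (rack_space op op) T) (realize_map op op p)"
    proof (subst continuous_map_in_subtopology, intro conjI)
      show "continuous_map (subtopology (rack_space op act) U) (rack_space op op) (realize_map op op p)"
        by (rule continuous_map_from_subtopology[OF realize_cont])
      show "realize_map op op p \<in> topspace (subtopology (rack_space op act) U) \<rightarrow> T"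
        using union U by auto
    qed
    have qm: "quotient_map (subtopology CR AR) (subtopology (rack_space op op) T) QR"
      by (rule quotient_map_restriction[OF _ preR]) (use openT in \<open>auto simp: rack_space_def quotient_map_quot\<close>)
    have c2: "continuous_map (subtopology (rack_space op op) T) (subtopology (rack_space op act) U) q"
    proof (rule continuous_compose_quotient_map[OF qm])
      have "continuous_map (subtopology CR AR) (rack_space op act) (QX \<circ> Lx act e z)"
        unfolding rack_space_def AR_def
        by (rule continuous_map_compose[OF Lx_cont[OF epos e2 tb z(1)] quotient_imp_continuous_map[OF quotient_map_quot]])
      moreover have "(QX \<circ> Lx act e z) \<in> topspace (subtopology CR AR) \<rightarrow> U"
        using LAX z(2) by auto
      ultimately have "continuous_map (subtopology CR AR) (subtopology (rack_space op act) U) (QX \<circ> Lx act e z)"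
        by (simp add: continuous_map_in_subtopology)
      then show "continuous_map (subtopology CR AR) (subtopology (rack_space op act) U) (q \<circ> QR)"
        by (rule continuous_map_eq) (auto simp: qQ)
    qed
    have i1: "q (realize_map op op p y) = y" if y: "y \<in> topspace (subtopology (rack_space op act) U)" for y
    proof -
      obtain a where a: "a \<in> AX z" "y = QX a" using y z(2) by auto
      have at: "a \<in> topspace CX" using a AXt by blast
      have PR: "Pm p a \<in> AR" using sigP[OF at] a z by blast
      have "Lx act e z (Pm p a) = a" by (rule Lx_P) (use a in \<open>simp add: AX_def Psi_def\<close>)
      then show ?thesis using realize_Q[OF at] qQ[OF PR] a by simp
    qed
    have i2: "realize_map op op p (q w) = w" if w: "w \<in> topspace (subtopology (rack_space op op) T)" for w
    proof -
      obtain a where a: "a \<in> AR" "w = QR a" using w by (auto simp: T_def)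
      have "Lx act e z a \<in> topspace CX" using LAX(1)[OF a(1)] AXt by blast
      then show ?thesis using qQ[OF a(1)] realize_Q LAX(2)[OF a(1)] a by simp
    qed
    show ?thesis unfolding homeomorphic_maps_def using c1 c2 i1 i2 by blast
  qed
  have oV: "\<forall>U\<in>\<V>. openin (rack_space op act) U" using openU by (auto simp: \<V>_def)
  show ?thesis
    by (rule exI[of _ T], intro conjI bT openT exI[of _ \<V>]) (use union oV disj homeo in blast)+
qed

end

theorem mainTheorem6:
  fixes op :: "'r \<Rightarrow> 'r \<Rightarrow> 'r" and act :: "'x \<Rightarrow> 'r \<Rightarrow> 'x" and p :: "'x \<Rightarrow> 'r"
  assumes "rack op"
    and "rack_action op act"
    and "\<And>x r. p (act x r) = op (p x) r"
    and "path_connected_space (rack_space op op)"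
    and "locally_path_connected_space (rack_space op op)"
  shows "covering_map (rack_space op act) (rack_space op op) (realize_map op op p)"
proof -
  interpret cm op act p using assms(1-3) by unfold_locales auto
  show ?thesis unfolding covering_map_def using realize_cont local_cover by blast
qed


end
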